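(* Consider the Best-I-Can-Afford (BICA) model with sellers of qualities $q_1,\dots,q_N$. (a) For any two sellers $i,j$ with $q_i>q_j$, seller $i$ weakly gradient-dominates seller $j$. (b) If moreover all qualities are distinct and the customers' willingness-to-pay distribution has a monotone hazard rate, then there exists a unique non-trivial local Nash equilibrium, and in it the sellers' prices are strictly increasing in their qualities (i.e., $q_i>q_j$ implies $p_i>p_j$).
   Context: There are $N$ sellers $\mathcal N=\{1,\dots,N\}$, each selling one item, and a unit mass of customers; prices lie in $[0,\bar v]$, $\mathbf p=(p_1,\dots,p_N)$. Seller $i$'s item has a quality $q_i$. BICA model: each customer has a willingness-to-pay $w_c$ drawn from a common distribution with CDF $F$ and density $f$ on $[0,\bar v]$ (density Lipschitz continuous); the customer considers exactly the sellers with $p_i\le w_c$ and buys the highest-quality item among them, breaking quality ties by lower price and then by an arbitrary fixed order; she buys nothing if no price is at most $w_c$. $R_i(\mathbf p)$ is seller $i$'s expected revenue (price times purchase probability), $g_i(p_i,\mathbf p_{-i})=\partial R_i(p,\mathbf p_{-i})/\partial p|_{p=p_i}$. Gradient dominance inequality: for sellers $i,j$, price $p\in(0,\bar v)$ and other prices $\mathbf p_{-\{i,j\}}$, the inequality is $g_i(p_i=p,p_j=0,\mathbf p_{-\{i,j\}})>\lim_{q\uparrow p}g_j(p_i=p,p_j=q,\mathbf p_{-\{i,j\}})$. A price vector is non-trivial if every seller setting a strictly positive price earns strictly positive revenue. Seller $i$ weakly gradient-dominates seller $j$ if the gradient dominance inequality holds for all $p\in(0,\bar v)$ and all $\mathbf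 p_{-\{i,j\}}$ for which the relevant price configuration is non-trivial (equivalently, for which seller $i$ pricing at $p$ earns strictly positive revenue). Local Nash equilibrium (LNE): $\mathbf p$ with $p_i\in[0,\bar v]$ such that there exist open neighborhoods $\mathcal U_i\subseteq\mathbb R$ with $p_i\in\mathcal U_i$ and $p_i\in\arg\max_{p\in\overline{\mathcal U_i}}R_i(p,\mathbf p_{-i})$ for all $i$. A distribution has a monotone hazard rate if $f(p)/(1-F(p))$ is non-decreasing in $p$. *)

theory Defs
  imports "HOL-Analysis.Analysis" "HOL-Library.FuncSet"
begin

text \<open>Customers' willingness-to-pay w has density f on [0, vbar].
  Ties in quality are broken by lower price, then by a fixed strict order given
  by an injective ranking tb on the sellers (smaller tb value wins).\<close>

definition sellers :: "nat \<Rightarrow> nat set" where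
  "sellers N = {1..N}"

definition bica_model ::
  "nat \<Rightarrow> real \<Rightarrow> (real \<Rightarrow> real) \<Rightarrow> (nat \<Rightarrow> nat) \<Rightarrow> bool" where
  "bica_model N vbar f tb \<longleftrightarrow>
     0 < vbar \<and>
     (\<forall>w\<in>{0..vbar}. 0 \<le> f w) \<and>
     (f has_integral 1) {0..vbar} \<and>
     (\<exists>L. L-lipschitz_on {0..vbar} f) \<and>
     inj_on tb (sellers N)"

definition cdf :: "(real \<Rightarrow> real) \<Rightarrow> real \<Rightarrow> real" where
  "cdf f x = integral {0..x} f"

definition preferred ::
  "(nat \<Rightarrow> real) \<Rightarrow> (nat \<Rightarrow> nat) \<Rightarrow> (nat \<Rightarrow> real) \<Rightarrow> nat \<Rightarrow> nat \<Rightarrow> bool" where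
  "preferred q tb p i k \<longleftrightarrow>
     q i > q k \<or> (q i = q k \<and> (p i < p k \<or> (p i = p k \<and> tb i < tb k)))"

definition buys ::
  "nat \<Rightarrow> (nat \<Rightarrow> real) \<Rightarrow> (nat \<Rightarrow> nat) \<Rightarrow> (nat \<Rightarrow> real) \<Rightarrow> real \<Rightarrow> nat \<Rightarrow> bool" where
  "buys N q tb p w i \<longleftrightarrow>
     i \<in> sellers N \<and> p i \<le> w \<and>
     (\<forall>k\<in>sellers N. k \<noteq> i \<longrightarrow> p k \<le> w \<longrightarrow> preferred q tb p i k)"

definition revenue ::
  "nat \<Rightarrow> real \<Rightarrow> (real \<Rightarrow> real) \<Rightarrow> (nat \<Rightarrow> real) \<Rightarrow> (nat \<Rightarrow> nat)
     \<Rightarrow> nat \<Rightarrow> (nat \<Rightarrow> real) \<Rightarrow> real" where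
  "revenue N vbar f q tb i p =
     p i * integral {0..vbar} (\<lambda>w. if buys N q tb p w i then f w else 0)"

definition grad ::
  "nat \<Rightarrow> real \<Rightarrow> (real \<Rightarrow> real) \<Rightarrow> (nat \<Rightarrow> real) \<Rightarrow> (nat \<Rightarrow> nat)
     \<Rightarrow> nat \<Rightarrow> (nat \<Rightarrow> real) \<Rightarrow> real" where
  "grad N vbar f q tb i p = deriv (\<lambda>x. revenue N vbar f q tb i (p(i := x))) (p i)"

definition nontrivial ::
  "nat \<Rightarrow> real \<Rightarrow> (real \<Rightarrow> real) \<Rightarrow> (nat \<Rightarrow> real) \<Rightarrow> (nat \<Rightarrow> nat) \<Rightarrow> (nat \<Rightarrow> real) \<Rightarrow> bool" where
  "nontrivial N vbar f q tb p \<longleftrightarrow>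
     (\<forall>i\<in>sellers N. 0 < p i \<longrightarrow> 0 < revenue N vbar f q tb i p)"

definition grad_dom_ineq ::
  "nat \<Rightarrow> real \<Rightarrow> (real \<Rightarrow> real) \<Rightarrow> (nat \<Rightarrow> real) \<Rightarrow> (nat \<Rightarrow> nat)
     \<Rightarrow> nat \<Rightarrow> nat \<Rightarrow> real \<Rightarrow> (nat \<Rightarrow> real) \<Rightarrow> bool" where
  "grad_dom_ineq N vbar f q tb i j p r \<longleftrightarrow>
     (\<exists>L. ((\<lambda>s. grad N vbar f q tb j (r(i := p, j := s))) \<longlongrightarrow> L) (at_left p) \<and>
          grad N vbar f q tb i (r(i := p, j := 0)) > L)"

definition weakly_grad_dominates ::
  "nat \<Rightarrow> real \<Rightarrow> (real \<Rightarrow> real) \<Rightarrow> (nat \<Rightarrow> real) \<Rightarrow> (nat \<Rightarrow> nat) \<Rightarrow> nat \<Rightarrow> nat \<Rightarrow> bool" where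
  "weakly_grad_dominates N vbar f q tb i j \<longleftrightarrow>
     (\<forall>p \<in> {0<..<vbar}. \<forall>r.
        (\<forall>k\<in>sellers N - {i, j}. r k \<in> {0..vbar}) \<longrightarrow>
        (\<forall>\<^sub>F s in at_left p. nontrivial N vbar f q tb (r(i := p, j := s))) \<longrightarrow>
        grad_dom_ineq N vbar f q tb i j p r)"

definition local_nash ::
  "nat \<Rightarrow> real \<Rightarrow> (real \<Rightarrow> real) \<Rightarrow> (nat \<Rightarrow> real) \<Rightarrow> (nat \<Rightarrow> nat) \<Rightarrow> (nat \<Rightarrow> real) \<Rightarrow> bool" where
  "local_nash N vbar f q tb p \<longleftrightarrow>
     (\<forall>i\<in>sellers N. p i \<in> {0..vbar} \<and>
        (\<exists>U. open U \<and> p i \<in> U \<and>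
           (\<forall>x\<in>closure U. revenue N vbar f q tb i (p(i := x)) \<le> revenue N vbar f q tb i p)))"

definition monotone_hazard_rate :: "real \<Rightarrow> (real \<Rightarrow> real) \<Rightarrow> bool" where
  "monotone_hazard_rate vbar f \<longleftrightarrow>
     mono_on {x \<in> {0..vbar}. cdf f x < 1} (\<lambda>x. f x / (1 - cdf f x))"

end

theory Submission
  imports Defs
begin

definition Gm :: "real \<Rightarrow> (real \<Rightarrow> real) \<Rightarrow> real \<Rightarrow> real" where
  "Gm vbar f t = integral {0..vbar} (\<lambda>w. if w < t then f w else 0)"

definition opt :: "(real \<Rightarrow> real) \<Rightarrow> real \<Rightarrow> real" where
  "opt f b = (THE x. 0 < x \<and> x < b \<and> cdf f x < cdf f b \<and> cdf f b - cdf f x = x * f x)"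

fun Bs :: "real \<Rightarrow> (real \<Rightarrow> real) \<Rightarrow> nat \<Rightarrow> real" where
  "Bs vbar f 0 = vbar"
| "Bs vbar f (Suc n) = opt f (Bs vbar f n)"

definition rank :: "nat \<Rightarrow> (nat \<Rightarrow> real) \<Rightarrow> nat \<Rightarrow> nat" where
  "rank N q k = card {l \<in> sellers N. q k < q l}"

lemma finite_sellers[simp]: "finite (sellers N)" by (simp add: sellers_def)

lemma rank_less:
  assumes "i \<in> sellers N" "j \<in> sellers N" "q j < q i"
  shows "rank N q i < rank N q j"
proof -
  have "{l \<in> sellers N. q i < q l} \<subset> {l \<in> sellers N. q j < q l}"
    using assms by auto
  then show ?thesis unfolding rank_def by (intro psubset_card_mono) auto
qed

lemma rank_pred:
  assumes inj: "inj_on q (sellers N)" and k: "k \<in> sellers N" and r: "rank N q k = Suc m"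
  shows "\<exists>l\<in>sellers N. q k < q l \<and> rank N q l = m"
proof -
  define H where "H = {l \<in> sellers N. q k < q l}"
  have fin: "finite H" by (simp add: H_def)
  have "card H = Suc m" using r by (simp add: rank_def H_def)
  then have ne: "H \<noteq> {}" by auto
  define v where "v = Min (q ` H)"
  have "v \<in> q ` H" unfolding v_def using fin ne by (intro Min_in) auto
  then obtain l where l: "l \<in> H" "q l = v" by auto
  have minl: "\<forall>l'\<in>H. q l \<le> q l'" using l fin unfolding v_def by auto
  have eqset: "{l' \<in> sellers N. q l < q l'} = H - {l}"
  proof
    show "{l' \<in> sellers N. q l < q l'} \<subseteq> H - {l}" using l by (auto simp: H_def)
  next
    show "H - {l} \<subseteq> {l' \<in> sellers N. q l < q l'}"
    proof
      fix l' assume l': "l' \<in> H - {l}"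
      then have "q l \<le> q l'" using minl by auto
      moreover have "q l \<noteq> q l'" using l' l inj by (auto simp: H_def inj_on_def)
      ultimately show "l' \<in> {l' \<in> sellers N. q l < q l'}" using l' by (auto simp: H_def)
    qed
  qed
  have "rank N q l = m" unfolding rank_def eqset using l fin \<open>card H = Suc m\<close> by simp
  then show ?thesis using l by (auto simp: H_def)
qed

definition pe :: "nat \<Rightarrow> real \<Rightarrow> (real \<Rightarrow> real) \<Rightarrow> (nat \<Rightarrow> real) \<Rightarrow> nat \<Rightarrow> real" where
  "pe N vbar f q = (\<lambda>k. if k \<in> sellers N then Bs vbar f (Suc (rank N q k)) else undefined)"

lemma zero_rev:
  assumes "\<forall>w. \<not> buys N q tb P w k"
  shows "revenue N vbar f q tb k P = 0"
  unfolding revenue_def using assms by simp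

context
  fixes vbar :: real and f :: "real \<Rightarrow> real"
  assumes vpos: "0 < vbar" and fnn: "\<forall>w\<in>{0..vbar}. 0 \<le> f w"
    and fint: "(f has_integral 1) {0..vbar}" and fcont: "continuous_on {0..vbar} f"
begin

lemma f_integrable: "f integrable_on {a..b}" if "0 \<le> a" "b \<le> vbar"
proof -
  have "f integrable_on {0..vbar}" using fint by blast
  then show ?thesis by (rule integrable_on_subinterval) (use that in auto)
qed

lemma F0: "cdf f 0 = 0" by (simp add: cdf_def)

lemma Fv: "cdf f vbar = 1" using fint by (simp add: cdf_def integral_unique)

lemma F_nonneg: "0 \<le> cdf f x" if "0 \<le> x" "x \<le> vbar"
  unfolding cdf_def using that fnn by (intro integral_nonneg f_integrable) auto

lemma F_mono: "cdf f x \<le> cdf f y" if "0 \<le> x" "x \<le> y" "y \<le> vbar"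
proof -
  have "integral {0..x} f + integral {x..y} f = integral {0..y} f"
    by (rule Henstock_Kurzweil_Integration.integral_combine) (use that f_integrable in auto)
  moreover have "0 \<le> integral {x..y} f"
    using that fnn by (intro integral_nonneg f_integrable) auto
  ultimately show ?thesis unfolding cdf_def by linarith
qed

lemma F_le1: "cdf f x \<le> 1" if "0 \<le> x" "x \<le> vbar"
  using F_mono[of x vbar] that Fv by auto

lemma F_deriv_within: "((cdf f) has_real_derivative f x) (at x within {0..vbar})" if "x \<in> {0..vbar}"
  using integral_has_vector_derivative[OF fcont that] unfolding cdf_def
  by (simp add: has_real_derivative_iff_has_vector_derivative)

lemma F_deriv: "((cdf f) has_real_derivative f x) (at x)" if "0 < x" "x < vbar"
proof -
  have "((cdf f) has_real_derivative f x) (at x within {0<..<vbar})"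
    by (rule DERIV_subset[OF F_deriv_within]) (use that in auto)
  moreover have "at x within {0<..<vbar} = at x" by (rule at_within_open) (use that in auto)
  ultimately show ?thesis by simp
qed

lemma F_cont: "continuous_on {0..vbar} (cdf f)"
  using F_deriv_within
  by (meson DERIV_continuous continuous_on_eq_continuous_within)

lemma G_int: "(\<lambda>w. if w < t then f w else 0) integrable_on {0..vbar}"
proof -
  define c where "c = max 0 (min t vbar)"
  have "(\<lambda>w. if w \<in> {0..c} then f w else 0) integrable_on {0..vbar}"
  proof -
    have "{0..c} \<inter> {0..vbar} = {0..c}" using vpos by (auto simp: c_def)
    moreover have "f integrable_on {0..c}" using vpos by (intro f_integrable) (auto simp: c_def)
    ultimately show ?thesis unfolding integrable_restrict_Int by metis
  qed
  then show ?thesis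
    by (rule integrable_spike[of _ _ "{0, c}"]) (auto simp: c_def)
qed

lemma G_F: "Gm vbar f t = cdf f t" if "0 \<le> t" "t \<le> vbar"
proof -
  have "Gm vbar f t = integral {0..vbar} (\<lambda>w. if w \<in> {0..t} then f w else 0)"
    unfolding Gm_def by (rule integral_spike[of "{t}"]) auto
  also have "\<dots> = integral {0..t} f"
    unfolding integral_restrict_Int using that by (simp add: Int_absorb2)
  finally show ?thesis by (simp add: cdf_def)
qed

lemma G_top: "Gm vbar f t = 1" if "vbar < t"
proof -
  have "Gm vbar f t = integral {0..vbar} f"
    unfolding Gm_def by (rule integral_cong) (use that in auto)
  then show ?thesis using Fv by (simp add: cdf_def)
qed

lemma mass: "integral {0..vbar} (\<lambda>w. if x \<le> w \<and> w < b then f w else 0) = Gm vbar f b - Gm vbar f x"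
  if "x \<le> b"
proof -
  have "integral {0..vbar} (\<lambda>w. if x \<le> w \<and> w < b then f w else 0)
     = integral {0..vbar} (\<lambda>w. (if w < b then f w else 0) - (if w < x then f w else 0))"
    by (rule integral_cong) (use that in auto)
  also have "\<dots> = Gm vbar f b - Gm vbar f x"
    unfolding Gm_def by (rule integral_diff) (rule G_int)+
  finally show ?thesis .
qed

lemma buys_iff:
  assumes hi: "\<forall>l\<in>sellers N. l \<noteq> k \<longrightarrow> q k < q l \<longrightarrow> b \<le> p l"
    and eq: "\<forall>l\<in>sellers N. l \<noteq> k \<longrightarrow> q l = q k \<longrightarrow> x < p l"
    and wit: "b \<le> vbar \<Longrightarrow> \<exists>l\<in>sellers N. l \<noteq> k \<and> q k < q l \<and> p l \<le> b"
    and k: "k \<in> sellers N" and w: "w \<le> vbar"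
  shows "buys N q tb (p(k:=x)) w k \<longleftrightarrow> x \<le> w \<and> w < b"
proof
  assume B: "buys N q tb (p(k:=x)) w k"
  then have xw: "x \<le> w" by (simp add: buys_def)
  moreover have "w < b"
  proof (rule ccontr)
    assume "\<not> w < b"
    then have "b \<le> vbar" using w by auto
    then obtain l where l: "l \<in> sellers N" "l \<noteq> k" "q k < q l" "p l \<le> b" using wit by blast
    then have "p l \<le> w" using \<open>\<not> w < b\<close> by auto
    then have "preferred q tb (p(k:=x)) k l" using B l by (auto simp: buys_def)
    then show False using l by (auto simp: preferred_def)
  qed
  ultimately show "x \<le> w \<and> w < b" by simp
next
  assume A: "x \<le> w \<and> w < b"
  show "buys N q tb (p(k:=x)) w k"
    unfolding buys_def
  proof (intro conjI ballI impI)
    fix l assume l: "l \<in> sellers N" "l \<noteq> k" "(p(k:=x)) l \<le> w"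
    then have pl: "p l \<le> w" by simp
    show "preferred q tb (p(k:=x)) k l"
    proof (cases "q k < q l")
      case True then show ?thesis using hi l pl A by force
    next
      case False
      show ?thesis
      proof (cases "q l = q k")
        case True then show ?thesis using eq l by (auto simp: preferred_def)
      next
        case False2: False
        then show ?thesis using False by (auto simp: preferred_def)
      qed
    qed
  qed (use k A in auto)
qed

lemma revenue_formula:
  assumes hi: "\<forall>l\<in>sellers N. l \<noteq> k \<longrightarrow> q k < q l \<longrightarrow> b \<le> p l"
    and eq: "\<forall>l\<in>sellers N. l \<noteq> k \<longrightarrow> q l = q k \<longrightarrow> x < p l"
    and wit: "b \<le> vbar \<Longrightarrow> \<exists>l\<in>sellers N. l \<noteq> k \<and> q k < q l \<and> p l \<le> b"
    and k: "k \<in> sellers N"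
  shows "revenue N vbar f q tb k (p(k:=x)) = (if x \<le> b then x * (Gm vbar f b - Gm vbar f x) else 0)"
proof -
  have "revenue N vbar f q tb k (p(k:=x)) =
     x * integral {0..vbar} (\<lambda>w. if x \<le> w \<and> w < b then f w else 0)"
    unfolding revenue_def using buys_iff[OF hi eq wit k]
    by (intro arg_cong2[where f="(*)"] integral_cong) auto
  moreover have "x > b \<Longrightarrow> integral {0..vbar} (\<lambda>w. if x \<le> w \<and> w < b then f w else 0) = 0"
    by (subst integral_cong[where g="\<lambda>_. 0"]) auto
  ultimately show ?thesis using mass[of x b] by auto
qed

lemma phi_deriv: "((\<lambda>y. y * (C - cdf f y)) has_real_derivative (C - cdf f x - x * f x)) (at x)"
  if "0 < x" "x < vbar"
proof -
  have d1: "((\<lambda>y. C - cdf f y) has_real_derivative (0 - f x)) (at x)"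
    by (intro DERIV_diff DERIV_const F_deriv that)
  have "((\<lambda>y. y * (C - cdf f y)) has_real_derivative (1 * (C - cdf f x) + (0 - f x) * x)) (at x)"
    by (rule DERIV_mult[OF DERIV_ident d1])
  then show ?thesis by (simp add: algebra_simps)
qed

lemma deriv_local:
  assumes "0 < a" "a < x" "x < c" "c \<le> vbar" "\<forall>y\<in>{a<..<c}. R y = y * (C - cdf f y)"
  shows "(R has_real_derivative (C - cdf f x - x * f x)) (at x)"
proof -
  have ev: "eventually (\<lambda>y. y \<in> {a<..<c}) (nhds x)"
    using assms by (intro eventually_nhds_in_open) auto
  have ev2: "eventually (\<lambda>y. y * (C - cdf f y) = R y) (nhds x)"
    by (rule eventually_mono[OF ev]) (use assms(5) in auto)
  have dd: "((\<lambda>y. y * (C - cdf f y)) has_real_derivative (C - cdf f x - x * f x)) (at x)"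
    using assms by (intro phi_deriv) auto
  show ?thesis using DERIV_cong_ev[OF refl ev2 refl] dd by simp
qed

lemma F_small: "\<exists>d>0. \<forall>y. 0 \<le> y \<longrightarrow> y < d \<longrightarrow> y \<le> vbar \<longrightarrow> cdf f y < e" if "0 < e"
proof -
  have "0 \<in> {0..vbar}" using vpos by auto
  then have "\<exists>d>0. \<forall>y\<in>{0..vbar}. dist y 0 < d \<longrightarrow> dist (cdf f y) (cdf f 0) < e"
    using F_cont that unfolding continuous_on_iff by blast
  then obtain d where d: "d > 0" "\<forall>y\<in>{0..vbar}. dist y 0 < d \<longrightarrow> dist (cdf f y) (cdf f 0) < e"
    by blast
  then show ?thesis using F0 by (intro exI[of _ d]) (auto simp: dist_real_def)
qed

lemma crit_unique:
  assumes mhr: "monotone_hazard_rate vbar f"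
    and x: "0 < x1" "x1 < x2" "x2 < b" "b \<le> vbar"
    and Fx: "cdf f x1 < cdf f b" "cdf f x2 < cdf f b"
    and c1: "cdf f b - cdf f x1 = x1 * f x1" and c2: "cdf f b - cdf f x2 = x2 * f x2"
  shows False
proof -
  define u1 where "u1 = 1 - cdf f x1"
  define u2 where "u2 = 1 - cdf f x2"
  define c where "c = 1 - cdf f b"
  have c0: "0 \<le> c" using F_le1[of b] x by (simp add: c_def)
  have u21: "u2 \<le> u1" using F_mono[of x1 x2] x by (simp add: u1_def u2_def)
  have cu2: "c < u2" using Fx by (simp add: c_def u2_def)
  have u2pos: "0 < u2" using c0 cu2 by simp
  have u1pos: "0 < u1" using u21 u2pos by simp
  define h1 where "h1 = f x1 / u1"
  define h2 where "h2 = f x2 / u2"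
  have f1: "f x1 = h1 * u1" using u1pos by (simp add: h1_def)
  have f2: "f x2 = h2 * u2" using u2pos by (simp add: h2_def)
  have f1nn: "0 \<le> f x1" using fnn x by auto
  have f2nn: "0 \<le> f x2" using fnn x by auto
  have h1nn: "0 \<le> h1" using f1nn u1pos by (simp add: h1_def)
  have h12: "h1 \<le> h2"
  proof -
    have "x1 \<in> {x \<in> {0..vbar}. cdf f x < 1}" "x2 \<in> {x \<in> {0..vbar}. cdf f x < 1}"
      using x u1pos u2pos by (auto simp: u1_def u2_def)
    moreover have "mono_on {x \<in> {0..vbar}. cdf f x < 1} (\<lambda>x. f x / (1 - cdf f x))"
      using mhr unfolding monotone_hazard_rate_def by simp
    ultimately show ?thesis using x unfolding h1_def h2_def u1_def u2_def
      by (metis (no_types, lifting) mono_onD less_imp_le)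
  qed
  show False
  proof (cases "h2 = 0")
    case True
    then have "h1 = 0" using h1nn h12 by simp
    then show False using c1 f1 Fx by simp
  next
    case False
    then have h2pos: "0 < h2" using h1nn h12 by simp
    have e1: "x1 * h1 \<le> x1 * h2" using h12 x by (simp add: mult_left_mono)
    have e2: "x1 * h2 < x2 * h2" using h2pos x by simp
    have e3: "x1 * h1 = 1 - c / u1"
    proof -
      have "u1 - c = x1 * h1 * u1" using c1 f1 by (simp add: u1_def c_def)
      then show ?thesis using u1pos by (simp add: field_simps)
    qed
    have e4: "x2 * h2 = 1 - c / u2"
    proof -
      have "u2 - c = x2 * h2 * u2" using c2 f2 by (simp add: u2_def c_def)
      then show ?thesis using u2pos by (simp add: field_simps)
    qed
    have e5: "c / u1 \<le> c / u2" using c0 u21 u2pos by (simp add: divide_left_mono)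
    show False using e1 e2 e3 e4 e5 by linarith
  qed
qed

lemma crit_unique2:
  assumes mhr: "monotone_hazard_rate vbar f"
    and x: "0 < x1" "x1 < b" "0 < x2" "x2 < b" "b \<le> vbar"
    and Fx: "cdf f x1 < cdf f b" "cdf f x2 < cdf f b"
    and c1: "cdf f b - cdf f x1 = x1 * f x1" and c2: "cdf f b - cdf f x2 = x2 * f x2"
  shows "x1 = x2"
proof (rule ccontr)
  assume "x1 \<noteq> x2"
  then consider "x1 < x2" | "x2 < x1" by linarith
  then show False
  proof cases
    case 1 then show False using crit_unique[OF mhr _ 1] assms by auto
  next
    case 2 then show False using crit_unique[OF mhr _ 2] assms by auto
  qed
qed

lemma opt_props:
  assumes mhr: "monotone_hazard_rate vbar f" and b: "0 < b" "b \<le> vbar" and Fb: "0 < cdf f b"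
  shows "0 < opt f b \<and> opt f b < b \<and> cdf f (opt f b) < cdf f b
     \<and> cdf f b - cdf f (opt f b) = opt f b * f (opt f b) \<and> 0 < cdf f (opt f b)
     \<and> (\<forall>y\<in>{0..b}. y * (cdf f b - cdf f y) \<le> opt f b * (cdf f b - cdf f (opt f b)))"
proof -
  define \<phi> where "\<phi> y = y * (cdf f b - cdf f y)" for y
  have cont: "continuous_on {0..b} \<phi>"
    unfolding \<phi>_def
    by (intro continuous_intros continuous_on_subset[OF F_cont]) (use b in auto)
  obtain xs where xs: "xs \<in> {0..b}" "\<forall>y\<in>{0..b}. \<phi> y \<le> \<phi> xs"
    using continuous_attains_sup[OF compact_Icc _ cont] b by auto
  obtain d where d: "d > 0" "\<forall>y. 0 \<le> y \<longrightarrow> y < d \<longrightarrow> y \<le> vbar \<longrightarrow> cdf f y < cdf f b"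
    using F_small[OF Fb] by blast
  define y0 where "y0 = min (d/2) (b/2)"
  have y0: "0 < y0" "y0 < b" "y0 < d" using d b by (auto simp: y0_def)
  have "cdf f y0 < cdf f b" using d y0 b by auto
  then have "\<phi> y0 > 0" using y0 by (simp add: \<phi>_def)
  moreover have "\<phi> y0 \<le> \<phi> xs" using xs(2) y0 by auto
  ultimately have phipos: "\<phi> xs > 0" by linarith
  have xs0: "xs \<noteq> 0" using phipos by (auto simp: \<phi>_def)
  have xsb: "xs \<noteq> b" using phipos by (auto simp: \<phi>_def)
  have xsr: "0 < xs" "xs < b" using xs xs0 xsb by auto
  have Fxs: "cdf f xs < cdf f b" using phipos xsr by (simp add: \<phi>_def zero_less_mult_iff)
  have der: "(\<phi> has_real_derivative (cdf f b - cdf f xs - xs * f xs)) (at xs)"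
    unfolding \<phi>_def using xsr b by (intro phi_deriv) auto
  have crit0: "cdf f b - cdf f xs - xs * f xs = 0"
  proof (rule DERIV_local_max[OF der, of "min xs (b - xs)"])
    show "0 < min xs (b - xs)" using xsr by auto
    show "\<forall>y. \<bar>xs - y\<bar> < min xs (b - xs) \<longrightarrow> \<phi> y \<le> \<phi> xs"
      using xs(2) by (auto simp: abs_if split: if_splits)
  qed
  have P: "0 < xs \<and> xs < b \<and> cdf f xs < cdf f b \<and> cdf f b - cdf f xs = xs * f xs"
    using xsr Fxs crit0 by auto
  have opt_eq: "opt f b = xs"
    unfolding opt_def
  proof (rule the_equality)
    show "0 < xs \<and> xs < b \<and> cdf f xs < cdf f b \<and> cdf f b - cdf f xs = xs * f xs" by (rule P)
    fix x assume "0 < x \<and> x < b \<and> cdf f x < cdf f b \<and> cdf f b - cdf f x = x * f x"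
    then show "x = xs" using crit_unique2[OF mhr] P b by blast
  qed
  have fpos: "0 < f xs"
  proof -
    have "0 < xs * f xs" using P by linarith
    then show ?thesis using xsr by (simp add: zero_less_mult_iff)
  qed
  obtain e where e: "e > 0" "\<forall>h>0. h < e \<longrightarrow> cdf f (xs - h) < cdf f xs"
    using DERIV_pos_inc_left[OF F_deriv fpos] xsr b by auto
  define h where "h = min (e/2) (xs/2)"
  have "cdf f (xs - h) < cdf f xs" using e xsr by (auto simp: h_def)
  moreover have "0 \<le> cdf f (xs - h)" using xsr b e by (intro F_nonneg) (auto simp: h_def)
  ultimately have "0 < cdf f xs" by linarith
  then show ?thesis using P xs(2) opt_eq by (simp add: \<phi>_def)
qed

lemma Bs_props:
  assumes mhr: "monotone_hazard_rate vbar f"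
  shows "0 < Bs vbar f n \<and> Bs vbar f n \<le> vbar \<and> 0 < cdf f (Bs vbar f n)"
proof (induction n)
  case 0 then show ?case using vpos Fv by auto
next
  case (Suc n)
  then show ?case using opt_props[OF mhr, of "Bs vbar f n"] by auto
qed

lemma Bs_step:
  assumes mhr: "monotone_hazard_rate vbar f"
  shows "Bs vbar f (Suc n) < Bs vbar f n"
  using opt_props[OF mhr, of "Bs vbar f n"] Bs_props[OF mhr, of n] by auto

lemma Bs_strict:
  assumes mhr: "monotone_hazard_rate vbar f" and "m < n"
  shows "Bs vbar f n < Bs vbar f m"
  using assms(2)
proof (induction n)
  case 0 then show ?case by simp
next
  case (Suc n)
  then show ?case using Bs_step[OF mhr, of n] by (cases "m = n") auto
qed

lemma Bs_anti:
  assumes mhr: "monotone_hazard_rate vbar f" and "m \<le> n"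
  shows "Bs vbar f n \<le> Bs vbar f m"
  using Bs_strict[OF mhr, of m n] assms(2) by (cases "m = n") auto

lemma rev_rank:
  assumes mhr: "monotone_hazard_rate vbar f" and inj: "inj_on q (sellers N)"
    and k: "k \<in> sellers N"
    and hip: "\<forall>l\<in>sellers N. q k < q l \<longrightarrow> p l = Bs vbar f (Suc (rank N q l))"
    and x: "0 \<le> x" "x \<le> vbar"
  shows "revenue N vbar f q tb k (p(k:=x)) =
    (if x \<le> Bs vbar f (rank N q k) then x * (cdf f (Bs vbar f (rank N q k)) - cdf f x) else 0)"
proof -
  define B where "B = Bs vbar f (rank N q k)"
  define bb where "bb = (if rank N q k = 0 then vbar + 1 else B)"
  have hi: "\<forall>l\<in>sellers N. l \<noteq> k \<longrightarrow> q k < q l \<longrightarrow> bb \<le> p l"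
  proof (intro ballI impI)
    fix l assume l: "l \<in> sellers N" "l \<noteq> k" "q k < q l"
    then have "rank N q l < rank N q k" using rank_less k by blast
    then have "Bs vbar f (rank N q k) \<le> Bs vbar f (Suc (rank N q l))"
      by (intro Bs_anti[OF mhr]) auto
    then show "bb \<le> p l" using hip l \<open>rank N q l < rank N q k\<close> by (auto simp: bb_def B_def)
  qed
  have eq: "\<forall>l\<in>sellers N. l \<noteq> k \<longrightarrow> q l = q k \<longrightarrow> x < p l"
    using inj k by (auto simp: inj_on_def)
  have wit: "\<exists>l\<in>sellers N. l \<noteq> k \<and> q k < q l \<and> p l \<le> bb" if "bb \<le> vbar"
  proof -
    have "rank N q k \<noteq> 0" using that vpos by (auto simp: bb_def split: if_splits)
    then obtain m where m: "rank N q k = Suc m" by (cases "rank N q k") auto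
    obtain l where l: "l \<in> sellers N" "q k < q l" "rank N q l = m" using rank_pred[OF inj k m] by blast
    then have "p l = bb" using hip m by (auto simp: bb_def B_def)
    then show ?thesis using l by auto
  qed
  have R: "revenue N vbar f q tb k (p(k:=x)) = (if x \<le> bb then x * (Gm vbar f bb - Gm vbar f x) else 0)"
    by (rule revenue_formula[OF hi eq wit k])
  have Bp: "0 < B" "B \<le> vbar" using Bs_props[OF mhr] by (auto simp: B_def)
  have Gbb: "Gm vbar f bb = cdf f B"
  proof (cases "rank N q k = 0")
    case True
    then show ?thesis using G_top[of "vbar+1"] Fv by (simp add: bb_def B_def)
  next
    case False
    then show ?thesis using G_F[of B] Bp by (simp add: bb_def)
  qed
  have Gx: "Gm vbar f x = cdf f x" using G_F x by auto
  show ?thesis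
  proof (cases "x \<le> B")
    case True
    then have "x \<le> bb" using Bp by (auto simp: bb_def)
    then show ?thesis using R Gbb Gx True by (simp add: B_def)
  next
    case False
    have "rank N q k \<noteq> 0"
    proof
      assume "rank N q k = 0"
      then have "B = vbar" by (simp add: B_def)
      then show False using False x by simp
    qed
    then have "bb = B" by (simp add: bb_def)
    then show ?thesis using R False by (simp add: B_def)
  qed
qed

lemma pe_seller:
  assumes mhr: "monotone_hazard_rate vbar f" and inj: "inj_on q (sellers N)" and k: "k \<in> sellers N"
  shows "pe N vbar f q k \<in> {0..vbar} \<and> 0 < revenue N vbar f q tb k (pe N vbar f q)
    \<and> (\<exists>U. open U \<and> pe N vbar f q k \<in> U \<and>
          (\<forall>x\<in>closure U. revenue N vbar f q tb k ((pe N vbar f q)(k:=x)) \<le> revenue N vbar f q tb k (pe N vbar f q)))"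
proof -
  define B where "B = Bs vbar f (rank N q k)"
  define P where "P = pe N vbar f q k"
  have PB: "P = opt f B" using k by (simp add: P_def B_def pe_def)
  have Bp: "0 < B" "B \<le> vbar" "0 < cdf f B" using Bs_props[OF mhr] by (auto simp: B_def)
  note O = opt_props[OF mhr Bp, folded PB]
  have hip: "\<forall>l\<in>sellers N. q k < q l \<longrightarrow> pe N vbar f q l = Bs vbar f (Suc (rank N q l))"
    by (simp add: pe_def)
  have rev: "revenue N vbar f q tb k ((pe N vbar f q)(k:=x)) = x * (cdf f B - cdf f x)"
    if "0 \<le> x" "x \<le> B" for x
    using rev_rank[OF mhr inj k hip, of x tb] that Bp by (simp add: B_def)
  have triv: "(pe N vbar f q)(k := P) = pe N vbar f q" by (simp add: P_def)
  have r0: "revenue N vbar f q tb k (pe N vbar f q) = P * (cdf f B - cdf f P)"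
    using rev[of P] O triv by simp
  define \<delta> where "\<delta> = min P (B - P) / 2"
  have dpos: "0 < \<delta>" using O by (simp add: \<delta>_def)
  have U: "open {P - \<delta><..<P + \<delta>}" "P \<in> {P - \<delta><..<P + \<delta>}" using dpos by auto
  have cl: "closure {P - \<delta><..<P + \<delta>} = {P - \<delta>..P + \<delta>}" using dpos by simp
  have "\<forall>x\<in>closure {P - \<delta><..<P + \<delta>}.
      revenue N vbar f q tb k ((pe N vbar f q)(k:=x)) \<le> revenue N vbar f q tb k (pe N vbar f q)"
  proof
    fix x assume "x \<in> closure {P - \<delta><..<P + \<delta>}"
    then have x: "P - \<delta> \<le> x" "x \<le> P + \<delta>" using cl by auto
    have dd: "2 * \<delta> \<le> P" "2 * \<delta> \<le> B - P" by (auto simp: \<delta>_def)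
    have PB2: "0 < P" "P < B" using O by auto
    have x0a: "0 \<le> x" using x(1) PB2 dd(1) by linarith
    have x0b: "x \<le> B" using x(2) PB2 dd(2) by linarith
    note x0 = x0a x0b
    then show "revenue N vbar f q tb k ((pe N vbar f q)(k:=x)) \<le> revenue N vbar f q tb k (pe N vbar f q)"
      using rev[OF x0] r0 O by auto
  qed
  moreover have "P \<in> {0..vbar}" using O Bp by auto
  moreover have "0 < revenue N vbar f q tb k (pe N vbar f q)" using O r0 by simp
  ultimately show ?thesis using U unfolding P_def[symmetric] by blast
qed

lemma pe_good:
  assumes mhr: "monotone_hazard_rate vbar f" and inj: "inj_on q (sellers N)"
  shows "pe N vbar f q \<in> sellers N \<rightarrow>\<^sub>E {0..vbar} \<and> nontrivial N vbar f q tb (pe N vbar f q)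
    \<and> local_nash N vbar f q tb (pe N vbar f q)"
  using pe_seller[OF mhr inj]
  unfolding nontrivial_def local_nash_def PiE_def extensional_def
  by (auto simp: pe_def)

lemma eq_pe:
  assumes mhr: "monotone_hazard_rate vbar f" and inj: "inj_on q (sellers N)"
    and pE: "p \<in> sellers N \<rightarrow>\<^sub>E {0..vbar}" and nt: "nontrivial N vbar f q tb p"
    and ln: "local_nash N vbar f q tb p"
  shows "p = pe N vbar f q"
proof -
  have main: "\<forall>k\<in>sellers N. rank N q k = n \<longrightarrow> p k = Bs vbar f (Suc n)" for n
  proof (induction n rule: less_induct)
    case (less n)
    show ?case
    proof (intro ballI impI)
      fix k assume k: "k \<in> sellers N" and rk: "rank N q k = n"
      have hip: "\<forall>l\<in>sellers N. q k < q l \<longrightarrow> p l = Bs vbar f (Suc (rank N q l))"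
        using less rank_less k rk by blast
      define B where "B = Bs vbar f n"
      have Bp: "0 < B" "B \<le> vbar" "0 < cdf f B" using Bs_props[OF mhr] by (auto simp: B_def)
      have rev: "revenue N vbar f q tb k (p(k:=x)) = (if x \<le> B then x * (cdf f B - cdf f x) else 0)"
        if "0 \<le> x" "x \<le> vbar" for x
        using rev_rank[OF mhr inj k hip that] rk by (simp add: B_def)
      define pk where "pk = p k"
      have pk: "0 \<le> pk" "pk \<le> vbar" using pE k by (auto simp: pk_def PiE_def Pi_def)
      have triv: "p(k := pk) = p" by (simp add: pk_def)
      have revp: "revenue N vbar f q tb k p = (if pk \<le> B then pk * (cdf f B - cdf f pk) else 0)"
        using rev[OF pk] triv by simp
      obtain U where U: "open U" "pk \<in> U"
        "\<forall>x\<in>closure U. revenue N vbar f q tb k (p(k:=x)) \<le> revenue N vbar f q tb k p"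
        using ln k unfolding local_nash_def pk_def by blast
      obtain e where e: "e > 0" "ball pk e \<subseteq> U" using U openE by blast
      have inU: "revenue N vbar f q tb k (p(k:=y)) \<le> revenue N vbar f q tb k p" if "\<bar>pk - y\<bar> < e" for y
      proof -
        have "y \<in> ball pk e" using that by (simp add: dist_real_def)
        then have "y \<in> closure U" using e closure_subset by blast
        then show ?thesis using U by blast
      qed
      have pk0: "pk \<noteq> 0"
      proof
        assume z: "pk = 0"
        obtain d where d: "d > 0" "\<forall>y. 0 \<le> y \<longrightarrow> y < d \<longrightarrow> y \<le> vbar \<longrightarrow> cdf f y < cdf f B"
          using F_small[OF Bp(3)] by blast
        define x where "x = min (e/2) (min (d/2) (B/2))"
        have x: "0 < x" "x < B" "x < d" "x < e" using d e Bp by (auto simp: x_def)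
        have "cdf f x < cdf f B" using d x Bp by auto
        then have "0 < revenue N vbar f q tb k (p(k:=x))" using rev[of x] x Bp by auto
        moreover have "revenue N vbar f q tb k (p(k:=x)) \<le> revenue N vbar f q tb k p"
          using inU[of x] x z by auto
        moreover have "revenue N vbar f q tb k p = 0" using revp z by simp
        ultimately show False by simp
      qed
      then have pkpos: "0 < pk" using pk by simp
      have "0 < revenue N vbar f q tb k p" using nt k pkpos unfolding nontrivial_def pk_def by blast
      then have pkB: "pk \<le> B" "0 < pk * (cdf f B - cdf f pk)" using revp by (auto split: if_splits)
      then have FpB: "cdf f pk < cdf f B" using pkpos by (simp add: zero_less_mult_iff)
      then have pkB2: "pk < B" using pkB by (cases "pk = B") auto
      define \<phi> where "\<phi> y = y * (cdf f B - cdf f y)" for y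
      have der: "(\<phi> has_real_derivative (cdf f B - cdf f pk - pk * f pk)) (at pk)"
        unfolding \<phi>_def using pkpos pkB2 Bp by (intro phi_deriv) auto
      have crit0: "cdf f B - cdf f pk - pk * f pk = 0"
      proof (rule DERIV_local_max[OF der, of "min e (min pk (B - pk))"])
        show "0 < min e (min pk (B - pk))" using e pkpos pkB2 by auto
        show "\<forall>y. \<bar>pk - y\<bar> < min e (min pk (B - pk)) \<longrightarrow> \<phi> y \<le> \<phi> pk"
        proof (intro allI impI)
          fix y assume y: "\<bar>pk - y\<bar> < min e (min pk (B - pk))"
          then have y0: "0 \<le> y" "y \<le> B" "\<bar>pk - y\<bar> < e" by (auto simp: abs_if split: if_splits)
          have "revenue N vbar f q tb k (p(k:=y)) = \<phi> y" using rev[of y] y0 Bp by (simp add: \<phi>_def)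
          moreover have "revenue N vbar f q tb k p = \<phi> pk" using revp pkB by (simp add: \<phi>_def)
          ultimately show "\<phi> y \<le> \<phi> pk" using inU[OF y0(3)] by simp
        qed
      qed
      note O = opt_props[OF mhr Bp]
      have "pk = opt f B"
        using crit_unique2[OF mhr, of pk B "opt f B"] pkpos pkB2 Bp FpB crit0 O by auto
      then show "p k = Bs vbar f (Suc n)" by (simp add: pk_def B_def)
    qed
  qed
  show ?thesis
  proof
    fix k show "p k = pe N vbar f q k"
    proof (cases "k \<in> sellers N")
      case True then show ?thesis using main by (simp add: pe_def)
    next
      case False then show ?thesis using pE by (simp add: pe_def PiE_def extensional_def)
    qed
  qed
qed

lemma part_a:
  assumes inj_tb: "inj_on tb (sellers N)" and i: "i \<in> sellers N" and j: "j \<in> sellers N"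
    and qij: "q j < q i"
  shows "weakly_grad_dominates N vbar f q tb i j"
  unfolding weakly_grad_dominates_def
proof (intro ballI allI impI)
  fix p r
  assume p: "p \<in> {0<..<vbar}" and hr: "\<forall>k\<in>sellers N - {i, j}. r k \<in> {0..vbar}"
    and ev: "\<forall>\<^sub>F s in at_left p. nontrivial N vbar f q tb (r(i := p, j := s))"
  have ij: "i \<noteq> j" using qij by auto
  have p0: "0 < p" "p < vbar" using p by auto
  obtain a where a: "a < p" "\<forall>s>a. s < p \<longrightarrow> nontrivial N vbar f q tb (r(i := p, j := s))"
    using ev unfolding eventually_at_left_field by blast
  define a0 where "a0 = max a 0"
  have a0: "a0 < p" "0 \<le> a0" "a \<le> a0" using a p0 by (auto simp: a0_def)
  define V where "V s = r(i := p, j := s)" for s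
  have Vi: "V s i = p" for s using ij by (simp add: V_def)
  have Vj: "V s j = s" for s by (simp add: V_def)
  have Vl: "V s l = r l" if "l \<noteq> i" "l \<noteq> j" for s l using that by (simp add: V_def)
  have nt: "nontrivial N vbar f q tb (V s)" if "a0 < s" "s < p" for s
    using a that a0 by (simp add: V_def)
  define s0 where "s0 = (a0 + p) / 2"
  have s0: "a0 < s0" "s0 < p" using a0 by (auto simp: s0_def)
  have revi0: "0 < revenue N vbar f q tb i (V s0)"
    using nt[OF s0] i p0 Vi unfolding nontrivial_def by auto
  have H1: "p < r l" if l: "l \<in> sellers N" "l \<noteq> i" "q i \<le> q l" for l
  proof (rule ccontr)
    assume "\<not> p < r l"
    then have rl: "r l \<le> p" by simp
    have lj: "l \<noteq> j" using l qij by auto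
    show False
    proof (cases "q l = q i \<and> r l = p \<and> tb i < tb l")
      case True
      have "0 < revenue N vbar f q tb l (V s0)"
        using nt[OF s0] l p0 Vl[OF l(2) lj] True unfolding nontrivial_def by auto
      moreover have "revenue N vbar f q tb l (V s0) = 0"
      proof (rule zero_rev, intro allI notI)
        fix w assume Bu: "buys N q tb (V s0) w l"
        then have rw: "r l \<le> w" using Vl[OF l(2) lj] unfolding buys_def by auto
        have "V s0 i \<le> w" using rw True Vi by simp
        then have "preferred q tb (V s0) l i" using Bu i l(2) unfolding buys_def by auto
        then show False using True Vi Vl[OF l(2) lj] by (auto simp: preferred_def)
      qed
      ultimately show False by simp
    next
      case False
      have "revenue N vbar f q tb i (V s0) = 0"
      proof (rule zero_rev, intro allI notI)
        fix w assume B: "buys N q tb (V s0) w i"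
        then have "p \<le> w" using Vi unfolding buys_def by auto
        then have "preferred q tb (V s0) i l" using B l rl Vl[OF l(2) lj] unfolding buys_def by auto
        then show False using False l rl Vi Vl[OF l(2) lj] by (auto simp: preferred_def)
      qed
      then show False using revi0 by simp
    qed
  qed
  have H2: "p \<le> r l" if l: "l \<in> sellers N" "l \<noteq> i" "l \<noteq> j" "q j \<le> q l" for l
  proof (rule ccontr)
    assume "\<not> p \<le> r l"
    then have rl: "r l < p" by simp
    have "q l < q i" using H1[of l] l rl by fastforce
    define s1 where "s1 = (max a0 (r l) + p) / 2"
    have s1: "a0 < s1" "s1 < p" "r l < s1" using rl a0 by (auto simp: s1_def)
    have "0 < revenue N vbar f q tb j (V s1)"
      using nt[OF s1(1,2)] j s1 a0 Vj unfolding nontrivial_def by auto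
    moreover have "revenue N vbar f q tb j (V s1) = 0"
    proof (rule zero_rev, intro allI notI)
      fix w assume B: "buys N q tb (V s1) w j"
      then have "s1 \<le> w" using Vj unfolding buys_def by auto
      then have "preferred q tb (V s1) j l" using B l s1 Vl[OF l(2,3)] unfolding buys_def by auto
      then show False using l s1 Vj Vl[OF l(2,3)] by (auto simp: preferred_def)
    qed
    ultimately show False by simp
  qed
  define Hs where "Hs = r ` {l \<in> sellers N. l \<noteq> i \<and> q i < q l}"
  define Cs where "Cs = r ` {l \<in> sellers N. l \<noteq> i \<and> q i \<le> q l}"
  define b where "b = Min (insert (vbar + 1) Hs)"
  define c where "c = Min (insert vbar Cs)"
  have finH: "finite Hs" "finite Cs" by (auto simp: Hs_def Cs_def)
  have cv: "c \<le> vbar" unfolding c_def using finH by auto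
  have HC: "Hs \<subseteq> Cs" by (auto simp: Hs_def Cs_def)
  have cb: "c \<le> b"
    unfolding b_def
  proof (subst Min_ge_iff)
    show "finite (insert (vbar + 1) Hs)" using finH by simp
    show "insert (vbar + 1) Hs \<noteq> {}" by simp
    show "\<forall>a\<in>insert (vbar + 1) Hs. c \<le> a"
    proof
      fix a assume "a \<in> insert (vbar + 1) Hs"
      then consider "a = vbar + 1" | "a \<in> Cs" using HC by auto
      then show "c \<le> a"
      proof cases
        case 1 then show ?thesis using cv by simp
      next
        case 2 then show ?thesis unfolding c_def using finH by auto
      qed
    qed
  qed
  have pc: "p < c" unfolding c_def using finH p0 H1 by (auto simp: Cs_def)
  have revi: "revenue N vbar f q tb i ((V s)(i := x)) = x * (Gm vbar f b - Gm vbar f x)"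
    if "x < c" for s x
  proof -
    have hi: "\<forall>l\<in>sellers N. l \<noteq> i \<longrightarrow> q i < q l \<longrightarrow> b \<le> V s l"
    proof (intro ballI impI)
      fix l assume l: "l \<in> sellers N" "l \<noteq> i" "q i < q l"
      then have "l \<noteq> j" using qij by auto
      then have "V s l = r l" using Vl l by auto
      moreover have "r l \<in> Hs" using l by (auto simp: Hs_def)
      ultimately show "b \<le> V s l" unfolding b_def using finH by auto
    qed
    have eq: "\<forall>l\<in>sellers N. l \<noteq> i \<longrightarrow> q l = q i \<longrightarrow> x < V s l"
    proof (intro ballI impI)
      fix l assume l: "l \<in> sellers N" "l \<noteq> i" "q l = q i"
      then have "l \<noteq> j" using qij by auto
      then have "V s l = r l" using Vl l by auto
      moreover have "r l \<in> Cs" using l by (auto simp: Cs_def)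
      then have "c \<le> r l" unfolding c_def using finH by auto
      ultimately show "x < V s l" using that by auto
    qed
    have wit: "\<exists>l\<in>sellers N. l \<noteq> i \<and> q i < q l \<and> V s l \<le> b" if "b \<le> vbar"
    proof -
      have "b \<in> insert (vbar + 1) Hs" unfolding b_def using finH by (intro Min_in) auto
      then have "b \<in> Hs" using that by auto
      then obtain l where l: "l \<in> sellers N" "l \<noteq> i" "q i < q l" "r l = b" by (auto simp: Hs_def)
      then have "l \<noteq> j" using qij by auto
      then show ?thesis using l Vl by auto
    qed
    show ?thesis using revenue_formula[OF hi eq wit i, where tb=tb] that cb by auto
  qed
  have gi_der: "((\<lambda>x. revenue N vbar f q tb i ((V 0)(i := x))) has_real_derivative
      (Gm vbar f b - cdf f p - p * f p)) (at p)"
  proof (rule deriv_local[of "p/2" p c])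
    show "\<forall>y\<in>{p / 2<..<c}. revenue N vbar f q tb i ((V 0)(i := y)) = y * (Gm vbar f b - cdf f y)"
      using revi G_F cv p0 by auto
  qed (use p0 pc cv in auto)
  have gi: "grad N vbar f q tb i (r(i := p, j := 0)) = Gm vbar f b - cdf f p - p * f p"
    unfolding grad_def using DERIV_imp_deriv[OF gi_der] Vi by (simp add: V_def)
  have pos: "0 < Gm vbar f b - cdf f p"
  proof -
    have "revenue N vbar f q tb i (V s0) = revenue N vbar f q tb i ((V s0)(i := p))"
      using Vi by (metis fun_upd_triv)
    also have "\<dots> = p * (Gm vbar f b - Gm vbar f p)" using revi pc by auto
    finally show ?thesis using revi0 p0 G_F[of p] by (simp add: zero_less_mult_iff)
  qed
  have gj: "grad N vbar f q tb j (r(i := p, j := s)) = cdf f p - cdf f s - s * f s"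
    if s: "a0 < s" "s < p" for s
  proof -
    have hi: "\<forall>l\<in>sellers N. l \<noteq> j \<longrightarrow> q j < q l \<longrightarrow> p \<le> V s l"
      using H2 Vi Vl by (metis less_imp_le order_refl)
    have eq: "\<forall>l\<in>sellers N. l \<noteq> j \<longrightarrow> q l = q j \<longrightarrow> x < V s l" if "x < p" for x
    proof (intro ballI impI)
      fix l assume l: "l \<in> sellers N" "l \<noteq> j" "q l = q j"
      then have "l \<noteq> i" using qij by auto
      then show "x < V s l" using H2[of l] l Vl that by auto
    qed
    have wit: "\<exists>l\<in>sellers N. l \<noteq> j \<and> q j < q l \<and> V s l \<le> p"
      using i ij qij Vi by auto
    have R: "revenue N vbar f q tb j ((V s)(j := y)) = y * (cdf f p - cdf f y)"
      if "0 < y" "y < p" for y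
      using revenue_formula[OF hi eq[OF that(2)] wit j, where tb=tb] that G_F[of p] G_F[of y] p0 by auto
    have der: "((\<lambda>y. revenue N vbar f q tb j ((V s)(j := y))) has_real_derivative
      (cdf f p - cdf f s - s * f s)) (at s)"
      by (rule deriv_local[of "s/2" s p]) (use s a0 p0 R in auto)
    show ?thesis
      unfolding grad_def using DERIV_imp_deriv[OF der] Vj by (simp add: V_def)
  qed
  have evg: "\<forall>\<^sub>F s in at_left p. cdf f p - cdf f s - s * f s = grad N vbar f q tb j (r(i := p, j := s))"
    unfolding eventually_at_left_field using a0 gj by (intro exI[of _ a0]) auto
  have ctF: "isCont (cdf f) p" using F_deriv p0 by (blast intro: DERIV_isCont)
  have ctf: "isCont f p" using fcont p0 by (intro continuous_on_interior[of "{0..vbar}"]) auto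
  have "isCont (\<lambda>s. cdf f p - cdf f s - s * f s) p"
    using ctF ctf by (intro continuous_intros) auto
  then have "((\<lambda>s. cdf f p - cdf f s - s * f s) \<longlongrightarrow> cdf f p - cdf f p - p * f p) (at p)"
    by (simp add: isCont_def)
  then have "((\<lambda>s. cdf f p - cdf f s - s * f s) \<longlongrightarrow> cdf f p - cdf f p - p * f p) (at_left p)"
    by (rule tendsto_mono[OF at_le, rotated]) auto
  then have lim: "((\<lambda>s. grad N vbar f q tb j (r(i := p, j := s))) \<longlongrightarrow> - (p * f p)) (at_left p)"
    using tendsto_cong[OF evg] by simp
  show "grad_dom_ineq N vbar f q tb i j p r"
    unfolding grad_dom_ineq_def using lim gi pos by (intro exI[of _ "- (p * f p)"]) auto
qed

end

theorem proposition4p4: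
  fixes N :: nat and vbar :: real and f :: "real \<Rightarrow> real"
    and q :: "nat \<Rightarrow> real" and tb :: "nat \<Rightarrow> nat"
  assumes model: "bica_model N vbar f tb"
  shows "(\<forall>i\<in>sellers N. \<forall>j\<in>sellers N. q i > q j \<longrightarrow> weakly_grad_dominates N vbar f q tb i j)
    \<and> ((inj_on q (sellers N) \<and> monotone_hazard_rate vbar f) \<longrightarrow>
        (\<exists>!p. p \<in> sellers N \<rightarrow>\<^sub>E {0..vbar} \<and> nontrivial N vbar f q tb p \<and> local_nash N vbar f q tb p)
        \<and> (\<forall>p. p \<in> sellers N \<rightarrow>\<^sub>E {0..vbar} \<and> nontrivial N vbar f q tb p \<and> local_nash N vbar f q tb p
               \<longrightarrow> (\<forall>i\<in>sellers N. \<forall>j\<in>sellers N. q i > q j \<longrightarrow> p i > p j)))"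
proof -
  have vpos: "0 < vbar" and fnn: "\<forall>w\<in>{0..vbar}. 0 \<le> f w"
    and fint: "(f has_integral 1) {0..vbar}" and injtb: "inj_on tb (sellers N)"
    using model by (auto simp: bica_model_def)
  obtain L where "L-lipschitz_on {0..vbar} f" using model by (auto simp: bica_model_def)
  then have fcont: "continuous_on {0..vbar} f" by (rule lipschitz_on_continuous_on)
  note ctx = vpos fnn fint fcont
  have A: "\<forall>i\<in>sellers N. \<forall>j\<in>sellers N. q i > q j \<longrightarrow> weakly_grad_dominates N vbar f q tb i j"
  proof (intro ballI impI)
    fix i j assume i: "i \<in> sellers N" and j: "j \<in> sellers N" and qij: "q i > q j"
    show "weakly_grad_dominates N vbar f q tb i j" by (rule part_a[OF ctx injtb i j qij])
  qed
  have B: "(\<exists>!p. p \<in> sellers N \<rightarrow>\<^sub>E {0..vbar} \<and> nontrivial N vbar f q tb p \<and> local_nash N vbar f q tb p)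
        \<and> (\<forall>p. p \<in> sellers N \<rightarrow>\<^sub>E {0..vbar} \<and> nontrivial N vbar f q tb p \<and> local_nash N vbar f q tb p
               \<longrightarrow> (\<forall>i\<in>sellers N. \<forall>j\<in>sellers N. q i > q j \<longrightarrow> p i > p j))"
    if inj: "inj_on q (sellers N)" and mhr: "monotone_hazard_rate vbar f"
  proof
    show "\<exists>!p. p \<in> sellers N \<rightarrow>\<^sub>E {0..vbar} \<and> nontrivial N vbar f q tb p \<and> local_nash N vbar f q tb p"
    proof (rule ex1I[of _ "pe N vbar f q"])
      show "pe N vbar f q \<in> sellers N \<rightarrow>\<^sub>E {0..vbar} \<and> nontrivial N vbar f q tb (pe N vbar f q)
         \<and> local_nash N vbar f q tb (pe N vbar f q)" by (rule pe_good[OF ctx mhr inj])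
      fix p assume H: "p \<in> sellers N \<rightarrow>\<^sub>E {0..vbar} \<and> nontrivial N vbar f q tb p \<and> local_nash N vbar f q tb p"
      show "p = pe N vbar f q"
        using H by (intro eq_pe[OF ctx mhr inj]) auto
    qed
    show "\<forall>p. p \<in> sellers N \<rightarrow>\<^sub>E {0..vbar} \<and> nontrivial N vbar f q tb p \<and> local_nash N vbar f q tb p
               \<longrightarrow> (\<forall>i\<in>sellers N. \<forall>j\<in>sellers N. q i > q j \<longrightarrow> p i > p j)"
    proof (intro allI impI ballI)
      fix p i j
      assume H: "p \<in> sellers N \<rightarrow>\<^sub>E {0..vbar} \<and> nontrivial N vbar f q tb p \<and> local_nash N vbar f q tb p"
        and i: "i \<in> sellers N" and j: "j \<in> sellers N" and qij: "q i > q j"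
      have pe: "p = pe N vbar f q" using H by (intro eq_pe[OF ctx mhr inj]) auto
      have "rank N q i < rank N q j" using rank_less[OF i j qij] .
      then have "Bs vbar f (Suc (rank N q j)) < Bs vbar f (Suc (rank N q i))"
        by (intro Bs_strict[OF ctx mhr]) auto
      then show "p i > p j" using pe i j by (simp add: pe_def)
    qed
  qed
  show ?thesis
  proof (intro conjI impI)
    show "\<forall>i\<in>sellers N. \<forall>j\<in>sellers N. q i > q j \<longrightarrow> weakly_grad_dominates N vbar f q tb i j"
      by (rule A)
  next
    assume "inj_on q (sellers N) \<and> monotone_hazard_rate vbar f"
    then have BB: "(\<exists>!p. p \<in> sellers N \<rightarrow>\<^sub>E {0..vbar} \<and> nontrivial N vbar f q tb p \<and> local_nash N vbar f q tb p)
        \<and> (\<forall>p. p \<in> sellers N \<rightarrow>\<^sub>E {0..vbar} \<and> nontrivial N vbar f q tb p \<and> local_nash N vbar f q tb p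
               \<longrightarrow> (\<forall>i\<in>sellers N. \<forall>j\<in>sellers N. q i > q j \<longrightarrow> p i > p j))"
      using B by simp
    show "\<exists>!p. p \<in> sellers N \<rightarrow>\<^sub>E {0..vbar} \<and> nontrivial N vbar f q tb p \<and> local_nash N vbar f q tb p"
      using BB by (rule conjunct1)
    show "\<forall>p. p \<in> sellers N \<rightarrow>\<^sub>E {0..vbar} \<and> nontrivial N vbar f q tb p \<and> local_nash N vbar f q tb p
               \<longrightarrow> (\<forall>i\<in>sellers N. \<forall>j\<in>sellers N. q i > q j \<longrightarrow> p i > p j)"
      using BB by (rule conjunct2)
  qed
qed

end
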